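(* Let $n \geqslant 1$, let $\lambda$ be an integer partition with $\lambda_1+\ell(\lambda)-1=n$, and let $c \in \mathfrak{S}_{n+1}$ be a Coxeter element. Then for every filling $f$ of $\lambda$ and every $k \in \{1,\ldots,n\}$, \[\sum_{\varepsilon=1}^{\delta_k} \mathcal{RSK}_{\lambda,c}(f)(\langle k,\varepsilon\rangle_\lambda) = \sum_{b \in \square_k(\lambda)} f(b).\]
   Context: Ferrers diagram $\mathrm{Fer}(\lambda)=\{(i,j):j\le\lambda_i\}$; fillings are maps $\mathrm{Fer}(\lambda)\to\mathbb{N}$. Diagonals $D_k(\lambda)=\{(i,j)\in\mathrm{Fer}(\lambda):\lambda_1+i-j=k\}$, $\delta_k=\max\{\min(i,j):(i,j)\in D_k(\lambda)\}$, $(i,j)\in D_k(\lambda)$ has coordinates $\langle k,\delta\rangle_\lambda$ with $\delta=\delta_k-\min(i,j)+1$; $\square_k(\lambda)$ is the order ideal of $\mathrm{Fer}(\lambda)$ (componentwise order) generated by $D_k(\lambda)$. Coxeter element: product of $s_1,\dots,s_n$ ($s_i=(i,i+1)$), each exactly once. Row/column labels: label the unit segments of the south-east boundary of $\mathrm{Fer}(\lambda)$ by $1,\dots,n+1$ from top-right to bottom-left; rows/columns inherit labels; $\mathbf L$ = row labels, $\mathbf R$ = column labels; $[\ell,r]$ = box with row label $\ell$, column label $r$ (exists iff $\ell<r$). Greene–Kleitman: for acyclic $G$ and $g:G_0\to\mathbb{N}$, $M_t$ = max over $t$-tuples of (possibly one-vertex) directed paths of the sum of $g$ over the union of their vertices,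 $M_0=0$, $\mathrm{GK}_G(g)=(M_t-M_{t-1})_{t\ge1}$. $\mathcal{RSK}_{\lambda,c}$: $\mathrm{AR}(c)$ has vertices the transpositions $(i,j)$, $1\le i<j\le n+1$, and arrows $(i,j)\to(i,c(j))$ if $i<c(j)$, $(i,j)\to(c(i),j)$ if $c(i)<j$; $\mathrm{AR}^{[k]}(c)$ is its full subgraph on $(\ell,r)$ with $\ell\le k<r$. $\mathrm{rep}_{\lambda,c}(f)(\ell,r)=f([\ell,r])$ if $\ell\in\mathbf L,r\in\mathbf R,\ell<r$, else $0$; $\mathcal{RSK}_{\lambda,c}(f)(\langle k,\delta\rangle_\lambda)$ is the $\delta$-th part of $\mathrm{GK}_{\mathrm{AR}^{[k]}(c)}$ of the restriction of $\mathrm{rep}_{\lambda,c}(f)$. *)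

theory Defs
  imports Main
begin

section \<open>Partitions, Ferrers diagrams, diagonals (1-based indices, English convention)\<close>

definition is_partition :: "nat list \<Rightarrow> bool" where
  "is_partition lam = (sorted_wrt (\<ge>) lam \<and> (\<forall>x\<in>set lam. 0 < x))"

definition part :: "nat list \<Rightarrow> nat \<Rightarrow> nat" where
  "part lam i = (if 1 \<le> i \<and> i \<le> length lam then lam ! (i - 1) else 0)"

definition lam1 :: "nat list \<Rightarrow> nat" where
  "lam1 lam = part lam 1"

definition Fer :: "nat list \<Rightarrow> (nat \<times> nat) set" where
  "Fer lam = {(i, j). 1 \<le> i \<and> i \<le> length lam \<and> 1 \<le> j \<and> j \<le> part lam i}"

text \<open>D_k: boxes with lam_1 + i - j = k (written without subtraction).\<close>
definition diag :: "nat list \<Rightarrow> nat \<Rightarrow> (nat \<times> nat) set" where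
  "diag lam k = {(i, j) \<in> Fer lam. lam1 lam + i = k + j}"

definition delta :: "nat list \<Rightarrow> nat \<Rightarrow> nat" where
  "delta lam k = Max ((\<lambda>(i, j). min i j) ` diag lam k)"

definition coord :: "nat list \<Rightarrow> nat \<Rightarrow> nat \<Rightarrow> nat \<times> nat" where
  "coord lam k d = (THE b. b \<in> diag lam k \<and> min (fst b) (snd b) + d = delta lam k + 1)"

definition sqk :: "nat list \<Rightarrow> nat \<Rightarrow> (nat \<times> nat) set" where
  "sqk lam k = {b \<in> Fer lam. \<exists>d\<in>diag lam k. fst b \<le> fst d \<and> snd b \<le> snd d}"

definition colLen :: "nat list \<Rightarrow> nat \<Rightarrow> nat" where
  "colLen lam j = card {i. 1 \<le> i \<and> i \<le> length lam \<and> j \<le> part lam i}"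

text \<open>Labels of south-east boundary segments, numbered 1..n+1 from top-right to
  bottom-left: row i gets the label of the vertical segment ending row i,
  column j the label of the horizontal segment ending column j.\<close>
definition rowlab :: "nat list \<Rightarrow> nat \<Rightarrow> nat" where
  "rowlab lam i = i + (lam1 lam - part lam i)"

definition collab :: "nat list \<Rightarrow> nat \<Rightarrow> nat" where
  "collab lam j = colLen lam j + (lam1 lam - j) + 1"

definition Lset :: "nat list \<Rightarrow> nat set" where
  "Lset lam = rowlab lam ` {1..length lam}"

definition Rset :: "nat list \<Rightarrow> nat set" where
  "Rset lam = collab lam ` {1..lam1 lam}"

definition rep :: "nat list \<Rightarrow> (nat \<times> nat \<Rightarrow> nat) \<Rightarrow> nat \<times> nat \<Rightarrow> nat" where
  "rep lam f = (\<lambda>(l, r). if l \<in> Lset lam \<and> r \<in> Rset lam \<and> l < r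
      then f (THE b. b \<in> Fer lam \<and> rowlab lam (fst b) = l \<and> collab lam (snd b) = r)
      else 0)"

definition sgen :: "nat \<Rightarrow> nat \<Rightarrow> nat" where
  "sgen i = (\<lambda>x. if x = i then i + 1 else if x = i + 1 then i else x)"

definition coxeter :: "nat \<Rightarrow> (nat \<Rightarrow> nat) \<Rightarrow> bool" where
  "coxeter n c = (\<exists>xs. distinct xs \<and> set xs = {1..n} \<and> c = foldr (\<lambda>i acc. sgen i \<circ> acc) xs id)"

definition ARverts :: "nat \<Rightarrow> (nat \<times> nat) set" where
  "ARverts n = {(i, j). 1 \<le> i \<and> i < j \<and> j \<le> n + 1}"

definition ARedge :: "(nat \<Rightarrow> nat) \<Rightarrow> nat \<times> nat \<Rightarrow> nat \<times> nat \<Rightarrow> bool" where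
  "ARedge c u v = ((fst u < c (snd u) \<and> v = (fst u, c (snd u)))
                 \<or> (c (fst u) < snd u \<and> v = (c (fst u), snd u)))"

definition ARk_verts :: "nat \<Rightarrow> nat \<Rightarrow> (nat \<times> nat) set" where
  "ARk_verts n k = {(l, r) \<in> ARverts n. l \<le> k \<and> k < r}"

definition is_dpath :: "'v set \<Rightarrow> ('v \<Rightarrow> 'v \<Rightarrow> bool) \<Rightarrow> 'v list \<Rightarrow> bool" where
  "is_dpath V E p = (p \<noteq> [] \<and> distinct p \<and> set p \<subseteq> V \<and>
      (\<forall>i. i + 1 < length p \<longrightarrow> E (p ! i) (p ! (i + 1))))"

definition GK_M :: "'v set \<Rightarrow> ('v \<Rightarrow> 'v \<Rightarrow> bool) \<Rightarrow> ('v \<Rightarrow> nat) \<Rightarrow> nat \<Rightarrow> nat" where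
  "GK_M V E g t = Max {sum g (\<Union>p\<in>set ps. set p) | ps. length ps = t \<and> (\<forall>p\<in>set ps. is_dpath V E p)}"

definition GK :: "'v set \<Rightarrow> ('v \<Rightarrow> 'v \<Rightarrow> bool) \<Rightarrow> ('v \<Rightarrow> nat) \<Rightarrow> nat \<Rightarrow> nat" where
  "GK V E g t = GK_M V E g t - GK_M V E g (t - 1)"

definition RSK :: "nat list \<Rightarrow> (nat \<Rightarrow> nat) \<Rightarrow> (nat \<times> nat \<Rightarrow> nat) \<Rightarrow> nat \<times> nat \<Rightarrow> nat" where
  "RSK lam c f b =
     (let n = lam1 lam + length lam - 1;
          k = lam1 lam + fst b - snd b;
          d = delta lam k + 1 - min (fst b) (snd b)
      in GK (ARk_verts n k) (ARedge c) (rep lam f) d)"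

end

theory Submission
  imports Defs
begin


lemma part_mono:
  assumes "is_partition lam" "1 \<le> i" "i \<le> i'" "i' \<le> length lam"
  shows "part lam i' \<le> part lam i"
proof (cases "i = i'")
  case False
  then have "i - 1 < i' - 1" using assms by auto
  moreover have "sorted_wrt (\<ge>) lam" using assms(1) by (simp add: is_partition_def)
  ultimately have "lam ! (i' - 1) \<le> lam ! (i - 1)"
    using assms by (auto simp: sorted_wrt_iff_nth_less)
  then show ?thesis using assms by (simp add: part_def)
qed simp

lemma part_pos:
  assumes "is_partition lam" "1 \<le> i" "i \<le> length lam"
  shows "1 \<le> part lam i"
proof -
  have "i - 1 < length lam" using assms by auto
  then have "lam ! (i - 1) \<in> set lam" by (rule nth_mem)
  then have "0 < lam ! (i - 1)" using assms(1) by (auto simp: is_partition_def)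
  then show ?thesis using assms by (auto simp: part_def)
qed

lemma part_le_lam1:
  assumes "is_partition lam"
  shows "part lam i \<le> lam1 lam"
proof (cases "1 \<le> i \<and> i \<le> length lam")
  case True then show ?thesis using part_mono[OF assms, of 1 i] by (simp add: lam1_def)
next
  case False then show ?thesis by (auto simp: part_def)
qed

lemma colLen_le: "colLen lam j \<le> length lam"
proof -
  have "{i. 1 \<le> i \<and> i \<le> length lam \<and> j \<le> part lam i} \<subseteq> {1..length lam}" by auto
  then show ?thesis unfolding colLen_def by (metis card_atLeastAtMost card_mono diff_Suc_1 finite_atLeastAtMost)
qed

lemma colLen_anti:
  assumes "j \<le> j'" shows "colLen lam j' \<le> colLen lam j"
  unfolding colLen_def
  by (rule card_mono) (use assms in auto)

lemma colLen_ge: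
  assumes "is_partition lam" "1 \<le> i" "i \<le> length lam" "j \<le> part lam i"
  shows "i \<le> colLen lam j"
proof -
  have "{1..i} \<subseteq> {i. 1 \<le> i \<and> i \<le> length lam \<and> j \<le> part lam i}"
    using assms part_mono[OF assms(1)] by fastforce
  then show ?thesis unfolding colLen_def
    by (metis (no_types, lifting) card_atLeastAtMost card_mono diff_Suc_1 finite_atLeastAtMost
        finite_nat_set_iff_bounded_le mem_Collect_eq)
qed

lemma colLen_lt:
  assumes "is_partition lam" "1 \<le> i" "i \<le> length lam" "part lam i < j"
  shows "colLen lam j < i"
proof -
  have "{i. 1 \<le> i \<and> i \<le> length lam \<and> j \<le> part lam i} \<subseteq> {1..i-1}"
  proof
    fix x assume x: "x \<in> {i. 1 \<le> i \<and> i \<le> length lam \<and> j \<le> part lam i}"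
    have "x < i"
    proof (rule ccontr)
      assume "\<not> x < i"
      then have "part lam x \<le> part lam i" using part_mono[OF assms(1) assms(2), of x] x by auto
      then show False using x assms by auto
    qed
    then show "x \<in> {1..i-1}" using x by auto
  qed
  then have "colLen lam j \<le> i - 1" unfolding colLen_def
    by (metis card_atLeastAtMost card_mono diff_Suc_1 finite_atLeastAtMost)
  then show ?thesis using assms by auto
qed

lemma label_iff:
  assumes "is_partition lam" "1 \<le> i" "i \<le> length lam" "1 \<le> j" "j \<le> lam1 lam"
  shows "j \<le> part lam i \<longleftrightarrow> rowlab lam i < collab lam j"
proof
  assume h: "j \<le> part lam i"
  have "i \<le> colLen lam j" using colLen_ge[OF assms(1-3) h] .
  then show "rowlab lam i < collab lam j"
    using h assms part_le_lam1[OF assms(1), of i] by (simp add: rowlab_def collab_def)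
next
  assume h: "rowlab lam i < collab lam j"
  show "j \<le> part lam i"
  proof (rule ccontr)
    assume "\<not> j \<le> part lam i"
    then have "colLen lam j < i" using colLen_lt[OF assms(1-3)] by simp
    then show False using h \<open>\<not> j \<le> part lam i\<close> assms part_le_lam1[OF assms(1), of i]
      by (simp add: rowlab_def collab_def)
  qed
qed

lemma rowlab_strict:
  assumes "is_partition lam" "1 \<le> i" "i < i'" "i' \<le> length lam"
  shows "rowlab lam i < rowlab lam i'"
  using part_mono[OF assms(1,2), of i'] assms part_le_lam1[OF assms(1), of i]
    part_le_lam1[OF assms(1), of i'] by (simp add: rowlab_def)

lemma collab_strict:
  assumes "j < j'" "j' \<le> lam1 lam"
  shows "collab lam j' < collab lam j"
  using colLen_anti[of j j' lam] assms by (simp add: collab_def)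

lemma in_Fer_iff_rc:
  assumes "is_partition lam" "1 \<le> i" "i \<le> colLen lam j" "1 \<le> j"
  shows "(i, j) \<in> Fer lam"
proof -
  have il: "i \<le> length lam" using assms colLen_le[of lam j] by linarith
  have "j \<le> part lam i"
  proof (rule ccontr)
    assume "\<not> j \<le> part lam i"
    then show False using colLen_lt[OF assms(1,2) il, of j] assms by simp
  qed
  then show ?thesis using assms il by (simp add: Fer_def)
qed



lemma Fer_D:
  assumes "is_partition lam" "(i, j) \<in> Fer lam"
  shows "1 \<le> i" "i \<le> length lam" "1 \<le> j" "j \<le> part lam i" "j \<le> lam1 lam"
  using assms part_le_lam1[OF assms(1), of i] by (auto simp: Fer_def)

lemma diag_rc:
  assumes "is_partition lam" "(i', j') \<in> Fer lam" "lam1 lam + i' = k + j'"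
  shows "rowlab lam i' \<le> k" "k < collab lam j'"
proof -
  note F = Fer_D[OF assms(1,2)]
  show "rowlab lam i' \<le> k" using F assms(3) by (simp add: rowlab_def)
  have "i' \<le> colLen lam j'" using colLen_ge[OF assms(1) F(1,2,4)] .
  then show "k < collab lam j'" using F assms(3) by (simp add: collab_def)
qed

lemma sqk_imp:
  assumes "is_partition lam" "(i, j) \<in> sqk lam k"
  shows "rowlab lam i \<le> k" "k < collab lam j"
proof -
  obtain i' j' where d: "(i', j') \<in> diag lam k" "i \<le> i'" "j \<le> j'" and ij: "(i, j) \<in> Fer lam"
    using assms(2) unfolding sqk_def by auto
  have F': "(i', j') \<in> Fer lam" "lam1 lam + i' = k + j'" using d(1) by (auto simp: diag_def)
  note F = Fer_D[OF assms(1) ij]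
  note G = Fer_D[OF assms(1) F'(1)]
  have "rowlab lam i \<le> rowlab lam i'"
    using rowlab_strict[OF assms(1) F(1), of i'] d G by (cases "i = i'") auto
  then show "rowlab lam i \<le> k" using diag_rc[OF assms(1) F'] by simp
  have "collab lam j' \<le> collab lam j"
    using collab_strict[of j j' lam] d G by (cases "j = j'") auto
  then show "k < collab lam j" using diag_rc[OF assms(1) F'] by simp
qed

lemma sqk_intro:
  assumes "is_partition lam" "(i, j) \<in> Fer lam" "rowlab lam i \<le> k" "k < collab lam j"
  shows "(i, j) \<in> sqk lam k"
proof -
  note F = Fer_D[OF assms(1,2)]
  have pl: "part lam i \<le> lam1 lam" using part_le_lam1[OF assms(1)] .
  show ?thesis
  proof (cases "i + lam1 lam \<le> k + j")
    case True
    define i' where "i' = k + j - lam1 lam"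
    have "i' \<le> colLen lam j" using assms(4) F True unfolding i'_def collab_def by simp
    moreover have "i \<le> i'" using True unfolding i'_def by simp
    ultimately have "(i', j) \<in> Fer lam" using in_Fer_iff_rc[OF assms(1), of i' j] F by simp
    moreover have "lam1 lam + i' = k + j" using True F unfolding i'_def by simp
    ultimately have "(i', j) \<in> diag lam k" by (simp add: diag_def)
    then show ?thesis using assms(2) \<open>i \<le> i'\<close> unfolding sqk_def by force
  next
    case False
    define j' where "j' = i + lam1 lam - k"
    have "j' \<le> part lam i" using assms(3) pl unfolding j'_def rowlab_def by simp
    then have "(i, j') \<in> Fer lam" using F False unfolding j'_def Fer_def by auto
    moreover have "lam1 lam + i = k + j'" using False unfolding j'_def by simp
    ultimately have "(i, j') \<in> diag lam k" by (simp add: diag_def)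
    moreover have "j \<le> j'" using False unfolding j'_def by simp
    ultimately show ?thesis using assms(2) unfolding sqk_def by force
  qed
qed



definition FF :: "nat list \<Rightarrow> nat \<Rightarrow> nat" where
  "FF xs = foldr (\<lambda>i acc. sgen i \<circ> acc) xs id"

lemma foldr_comp: "foldr (\<lambda>i acc. sgen i \<circ> acc) xs z = FF xs \<circ> z"
  unfolding FF_def by (induction xs) auto

lemma FF_Cons: "FF (y # ys) x = sgen y (FF ys x)"
  unfolding FF_def by simp

lemma FF_append: "FF (as @ bs) = FF as \<circ> FF bs"
  using foldr_comp[of as "FF bs"] unfolding FF_def by simp

lemma sgen_invol: "sgen i (sgen i x) = x"
  unfolding sgen_def by auto

lemma bij_sgen: "bij (sgen i)"
  by (metis bijI' sgen_invol)

lemma bij_FF: "bij (FF xs)"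
proof (induction xs)
  case Nil then show ?case by (simp add: FF_def bij_id[unfolded id_def])
next
  case (Cons a xs)
  have "FF (a # xs) = sgen a \<circ> FF xs" by (rule ext) (simp add: FF_Cons)
  then show ?case using Cons bij_sgen bij_comp by metis
qed

lemma FF_pres:
  assumes "j \<notin> set ys" shows "j < FF ys x \<longleftrightarrow> j < x"
  using assms
proof (induction ys)
  case Nil then show ?case by (simp add: FF_def)
next
  case (Cons a ys)
  then show ?case by (auto simp: FF_Cons sgen_def)
qed

lemma FF_fix:
  assumes "\<forall>i\<in>set ys. i \<noteq> x \<and> i + 1 \<noteq> x" shows "FF ys x = x"
  using assms
proof (induction ys)
  case Nil then show ?case by (simp add: FF_def)
next
  case (Cons a ys)
  then show ?case by (auto simp: FF_Cons sgen_def)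
qed

locale cox =
  fixes n :: nat and xs :: "nat list" and c :: "nat \<Rightarrow> nat"
  assumes n1: "1 \<le> n" and dxs: "distinct xs" and sxs: "set xs = {1..n}" and cdef: "c = FF xs"
begin

lemma split_at:
  assumes "j \<in> {1..n}"
  obtains as bs where "xs = as @ j # bs" "j \<notin> set as" "j \<notin> set bs"
    "c = FF as \<circ> sgen j \<circ> FF bs"
proof -
  obtain as bs where e: "xs = as @ j # bs" using assms sxs by (metis split_list)
  then have "j \<notin> set as" "j \<notin> set bs" using dxs by auto
  moreover have "c = FF as \<circ> sgen j \<circ> FF bs"
    unfolding cdef e FF_append by (rule ext) (simp add: FF_Cons FF_def)
  ultimately show ?thesis using that e by blast
qed

lemma inj_c: "inj c" using bij_FF[of xs] cdef bij_is_inj by simp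

lemma c_range:
  assumes "1 \<le> x" "x \<le> n + 1" shows "1 \<le> c x" "c x \<le> n + 1"
proof -
  have "0 \<notin> set xs" "n + 1 \<notin> set xs" using sxs by auto
  from FF_pres[OF this(1), of x] FF_pres[OF this(2), of x] assms
  show "1 \<le> c x" "c x \<le> n + 1" unfolding cdef by auto
qed

lemma exit_top_unique:
  assumes "j \<in> {1..n}" "j < x" "c x \<le> j" "j < y" "c y \<le> j"
  shows "x = y"
proof -
  obtain as bs where e: "xs = as @ j # bs" and s: "j \<notin> set as" "j \<notin> set bs" "c = FF as \<circ> sgen j \<circ> FF bs"
    by (rule split_at[OF assms(1)])
  have "\<And>z. j < z \<Longrightarrow> c z \<le> j \<Longrightarrow> FF bs z = j + 1"
  proof -
    fix z assume z: "j < z" "c z \<le> j"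
    have a: "j < FF bs z" using FF_pres[OF s(2), of z] z(1) by blast
    have cz: "c z = FF as (sgen j (FF bs z))" using s(3) by simp
    have "\<not> j < sgen j (FF bs z)" using FF_pres[OF s(1), of "sgen j (FF bs z)"] z(2) cz by linarith
    then show "FF bs z = j + 1" using a unfolding sgen_def by (auto split: if_splits)
  qed
  then have "FF bs x = FF bs y" using assms by metis
  then show ?thesis using bij_FF[of bs] unfolding bij_def inj_def by blast
qed

lemma exit_bot_unique:
  assumes "j \<in> {1..n}" "x \<le> j" "j < c x" "y \<le> j" "j < c y"
  shows "x = y"
proof -
  obtain as bs where e: "xs = as @ j # bs" and s: "j \<notin> set as" "j \<notin> set bs" "c = FF as \<circ> sgen j \<circ> FF bs"
    by (rule split_at[OF assms(1)])
  have "\<And>z. z \<le> j \<Longrightarrow> j < c z \<Longrightarrow> FF bs z = j"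
  proof -
    fix z assume z: "z \<le> j" "j < c z"
    have a: "\<not> j < FF bs z" using FF_pres[OF s(2), of z] z(1) by linarith
    have cz: "c z = FF as (sgen j (FF bs z))" using s(3) by simp
    have "j < sgen j (FF bs z)" using FF_pres[OF s(1), of "sgen j (FF bs z)"] z(2) cz by linarith
    then show "FF bs z = j" using a unfolding sgen_def by (auto split: if_splits)
  qed
  then have "FF bs x = FF bs y" using assms by metis
  then show ?thesis using bij_FF[of bs] unfolding bij_def inj_def by blast
qed

lemma exit_top_ex:
  assumes "j \<in> {1..n}"
  shows "\<exists>x. j < x \<and> x \<le> n + 1 \<and> c x \<le> j"
proof -
  obtain as bs where e: "xs = as @ j # bs" and s: "j \<notin> set as" "j \<notin> set bs" "c = FF as \<circ> sgen j \<circ> FF bs"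
    by (rule split_at[OF assms(1)])
  obtain x where x: "FF bs x = j + 1" using bij_FF[of bs] by (metis bij_pointE)
  have "set bs \<subseteq> {1..n}" using sxs e by auto
  then have "n + 1 \<notin> set bs" by auto
  have "j < x" using FF_pres[OF s(2), of x] x by simp
  moreover have "x \<le> n + 1" using FF_pres[OF \<open>n + 1 \<notin> set bs\<close>, of x] x assms by simp
  moreover have "c x \<le> j" using s(3) x FF_pres[OF s(1), of j] by (simp add: sgen_def)
  ultimately show ?thesis by blast
qed

lemma exit_bot_ex:
  assumes "j \<in> {1..n}"
  shows "\<exists>x. 1 \<le> x \<and> x \<le> j \<and> j < c x"
proof -
  obtain as bs where e: "xs = as @ j # bs" and s: "j \<notin> set as" "j \<notin> set bs" "c = FF as \<circ> sgen j \<circ> FF bs"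
    by (rule split_at[OF assms(1)])
  obtain x where x: "FF bs x = j" using bij_FF[of bs] by (metis bij_pointE)
  have "set bs \<subseteq> {1..n}" using sxs e by auto
  then have "0 \<notin> set bs" by auto
  have "x \<le> j" using FF_pres[OF s(2), of x] x by simp
  moreover have "1 \<le> x" using FF_pres[OF \<open>0 \<notin> set bs\<close>, of x] x assms by simp
  moreover have "j < c x" using s(3) x FF_pres[OF s(1), of "j+1"] by (simp add: sgen_def)
  ultimately show ?thesis by blast
qed

lemma no_fix:
  assumes "1 \<le> x" "x \<le> n + 1" shows "c x \<noteq> x"
proof (cases "x \<le> n")
  case True
  have xin: "x \<in> {1..n}" using True assms by auto
  obtain as bs where e: "xs = as @ x # bs" and s: "x \<notin> set as" "x \<notin> set bs" "c = FF as \<circ> sgen x \<circ> FF bs"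
    by (rule split_at[OF xin])
  show ?thesis
  proof (cases "x - 1 \<in> set bs")
    case False
    have "FF bs x = x" using False s(2) assms by (intro FF_fix) force
    then have "x < c x" using s(3) FF_pres[OF s(1), of "x+1"] by (simp add: sgen_def)
    then show ?thesis by simp
  next
    case True
    then obtain bs1 bs2 where b: "bs = bs1 @ (x - 1) # bs2" by (metis split_list)
    have x2: "2 \<le> x" using True sxs e assms by (cases "x = 1") auto
    have xs2: "xs = (as @ x # bs1) @ (x - 1) # bs2" using e b by simp
    then have d: "x - 1 \<notin> set (as @ x # bs1)" "x - 1 \<notin> set bs2" "x \<notin> set bs2" using dxs by auto
    have cc: "c = FF (as @ x # bs1) \<circ> sgen (x - 1) \<circ> FF bs2"
      unfolding cdef xs2 FF_append by (rule ext) (simp add: FF_Cons FF_def)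
    have "FF bs2 x = x" using d x2 by (intro FF_fix) force
    moreover have "sgen (x - 1) x = x - 1" using x2 unfolding sgen_def by auto
    ultimately have "c x = FF (as @ x # bs1) (x - 1)" using cc by simp
    then have "\<not> x - 1 < c x" using FF_pres[OF d(1), of "x - 1"] by simp
    then show ?thesis using x2 by simp
  qed
next
  case False
  then have xN: "x = n + 1" using assms by simp
  have nin: "n \<in> {1..n}" using n1 by auto
  obtain as bs where e: "xs = as @ n # bs" and s: "n \<notin> set as" "n \<notin> set bs" "c = FF as \<circ> sgen n \<circ> FF bs"
    by (rule split_at[OF nin])
  have "\<forall>i\<in>set bs. i \<le> n" using e sxs by auto
  then have "FF bs x = x" using s(2) xN by (intro FF_fix) force
  then have "\<not> n < c x" using s(3) FF_pres[OF s(1), of n] xN by (simp add: sgen_def)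
  then show ?thesis using xN by simp
qed

end


definition arc :: "(nat \<Rightarrow> nat) \<Rightarrow> nat set \<Rightarrow> nat \<Rightarrow> nat \<Rightarrow> bool" where
  "arc c S s m = (1 \<le> m \<and> inj_on (\<lambda>i. (c^^i) s) {..<m} \<and> S = (\<lambda>i. (c^^i) s) ` {..<m})"

lemma arc_append:
  assumes "arc c S s m" "c ((c^^(m-1)) s) = a" "a \<notin> S"
  shows "arc c (insert a S) s (Suc m)"
proof -
  have m: "1 \<le> m" and inj: "inj_on (\<lambda>i. (c^^i) s) {..<m}" and S: "S = (\<lambda>i. (c^^i) s) ` {..<m}"
    using assms(1) by (auto simp: arc_def)
  have am: "(c^^m) s = a" using assms(2) m
    by (metis Suc_diff_1 funpow.simps(2) comp_apply less_le_trans zero_less_one)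
  have "(\<lambda>i. (c^^i) s) ` {..<Suc m} = insert a S" using am S by (simp add: lessThan_Suc)
  moreover have "inj_on (\<lambda>i. (c^^i) s) {..<Suc m}"
    unfolding lessThan_Suc using inj am assms(3) S by (simp add: inj_on_insert)
  ultimately show ?thesis by (simp add: arc_def)
qed

lemma arc_prepend:
  assumes "arc c S s m" "c a = s" "a \<notin> S"
  shows "arc c (insert a S) a (Suc m)"
proof -
  have m: "1 \<le> m" and inj: "inj_on (\<lambda>i. (c^^i) s) {..<m}" and S: "S = (\<lambda>i. (c^^i) s) ` {..<m}"
    using assms(1) by (auto simp: arc_def)
  have sh: "\<And>i. (c^^(Suc i)) a = (c^^i) s" using assms(2) by (simp add: funpow_Suc_right del: funpow.simps)
  have "(\<lambda>i. (c^^i) a) ` {..<Suc m} = insert a ((\<lambda>i. (c^^(Suc i)) a) ` {..<m})"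
    unfolding lessThan_Suc_eq_insert_0 by (auto simp: image_image simp del: funpow.simps)
  also have "\<dots> = insert a S" using S sh by simp
  finally have im: "(\<lambda>i. (c^^i) a) ` {..<Suc m} = insert a S" .
  have inj2: "inj_on (\<lambda>i. (c^^(Suc i)) a) {..<m}" using inj sh by simp
  have "inj_on (\<lambda>i. (c^^i) a) {..<Suc m}"
    unfolding lessThan_Suc_eq_insert_0
  proof (rule inj_on_insert[THEN iffD2], rule conjI)
    show "inj_on (\<lambda>i. (c^^i) a) (Suc ` {..<m})"
      using inj2 by (auto simp: inj_on_def simp del: funpow.simps)
    show "(c^^0) a \<notin> (\<lambda>i. (c^^i) a) ` (Suc ` {..<m} - {0})"
      using assms(3) S sh by (auto simp del: funpow.simps)
  qed
  then show ?thesis using im by (simp add: arc_def)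
qed

lemma arc_closed:
  assumes "arc c S s m" "c ((c^^(m-1)) s) \<in> S" "x \<in> S"
  shows "c x \<in> S"
proof -
  have m: "1 \<le> m" and S: "S = (\<lambda>i. (c^^i) s) ` {..<m}"
    using assms(1) by (auto simp: arc_def)
  obtain i where i: "i < m" "x = (c^^i) s" using assms(3) S by auto
  show ?thesis
  proof (cases "i = m - 1")
    case True then show ?thesis using assms(2) i by simp
  next
    case False
    then have "Suc i < m" using i by simp
    moreover have "c x = (c^^(Suc i)) s" using i by simp
    ultimately show ?thesis using S by blast
  qed
qed

lemma arc_entry:
  assumes "arc c S s m" "inj c" "a \<notin> S" "c a \<in> S"
  shows "c a = s"
proof -
  have m: "1 \<le> m" and S: "S = (\<lambda>i. (c^^i) s) ` {..<m}"
    using assms(1) by (auto simp: arc_def)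
  obtain i where i: "i < m" "c a = (c^^i) s" using assms(4) S by auto
  show ?thesis
  proof (cases i)
    case 0 then show ?thesis using i by simp
  next
    case (Suc i')
    then have "c a = c ((c^^i') s)" using i by simp
    then have "a = (c^^i') s" using assms(2) by (simp add: inj_eq)
    then have "a \<in> S" using S Suc i by auto
    then show ?thesis using assms(3) by simp
  qed
qed

lemma arc_last_in:
  assumes "arc c S s m" shows "(c^^(m-1)) s \<in> S"
  using assms by (auto simp: arc_def)

context cox begin

lemma top_arc:
  assumes "1 \<le> j" "j \<le> n"
  shows "\<exists>s m. arc c {j<..n+1} s m"
  using assms(2)
proof (induction j rule: inc_induct)
  case base
  have "{n<..n+1} = {n+1}" by auto
  then have "arc c {n<..n+1} (n+1) 1" by (auto simp: arc_def lessThan_Suc)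
  then show ?case by blast
next
  case (step j)
  obtain s m where A: "arc c {Suc j<..n+1} s m" using step.IH by auto
  define e where "e = (c^^(m-1)) s"
  have eT: "e \<in> {Suc j<..n+1}" using arc_last_in[OF A] e_def by simp
  have ins: "{j<..n+1} = insert (Suc j) {Suc j<..n+1}" using step by auto
  have nin: "Suc j \<notin> {Suc j<..n+1}" by simp
  show ?case
  proof (cases "c e = Suc j")
    case True
    have "arc c {j<..n+1} s (Suc m)" unfolding ins
      by (rule arc_append[OF A _ nin]) (use True e_def in simp)
    then show ?thesis by blast
  next
    case False
    have j1: "Suc j \<in> {1..n}" using step by auto
    have ceT: "c e \<notin> {Suc j<..n+1}"
    proof
      assume "c e \<in> {Suc j<..n+1}"
      then have cl: "\<And>x. x \<in> {Suc j<..n+1} \<Longrightarrow> c x \<in> {Suc j<..n+1}"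
        using arc_closed[OF A] e_def by blast
      obtain x where "Suc j < x" "x \<le> n + 1" "c x \<le> Suc j" using exit_top_ex[OF j1] by blast
      then show False using cl[of x] by auto
    qed
    have cer: "1 \<le> c e" "c e \<le> n + 1" using c_range[of e] eT by auto
    then have cej: "c e \<le> j" using ceT False by auto
    have jr: "1 \<le> Suc j" "Suc j \<le> n + 1" using step by auto
    have "c (Suc j) \<noteq> Suc j" using no_fix[OF jr] .
    moreover have "\<not> c (Suc j) \<le> j"
    proof
      assume "c (Suc j) \<le> j"
      then have "Suc j = e" using exit_top_unique[of j "Suc j" e] cej eT step assms by auto
      then show False using eT by simp
    qed
    moreover have "c (Suc j) \<le> n + 1" using c_range[OF jr] by simp
    ultimately have "c (Suc j) \<in> {Suc j<..n+1}" by auto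
    then have "c (Suc j) = s" using arc_entry[OF A inj_c nin] by simp
    then have "arc c {j<..n+1} (Suc j) (Suc m)" unfolding ins
      by (rule arc_prepend[OF A _ nin])
    then show ?thesis by blast
  qed
qed

lemma bot_arc:
  assumes "1 \<le> j" "j \<le> n"
  shows "\<exists>s m. arc c {1..j} s m"
  using assms
proof (induction j rule: dec_induct)
  case base
  have "arc c {1..1} 1 1" by (auto simp: arc_def lessThan_Suc)
  then show ?case by blast
next
  case (step j)
  have "j \<le> n" using step.prems by simp
  then obtain s m where A: "arc c {1..j} s m" using step.IH by auto
  define e where "e = (c^^(m-1)) s"
  have eT: "e \<in> {1..j}" using arc_last_in[OF A] e_def by simp
  have ins: "{1..Suc j} = insert (Suc j) {1..j}" using step by auto
  have nin: "Suc j \<notin> {1..j}" by simp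
  show ?case
  proof (cases "c e = Suc j")
    case True
    have "arc c {1..Suc j} s (Suc m)" unfolding ins
      by (rule arc_append[OF A _ nin]) (use True e_def in simp)
    then show ?thesis by blast
  next
    case False
    have j1: "j \<in> {1..n}" using step by auto
    have ceT: "c e \<notin> {1..j}"
    proof
      assume "c e \<in> {1..j}"
      then have cl: "\<And>x. x \<in> {1..j} \<Longrightarrow> c x \<in> {1..j}"
        using arc_closed[OF A] e_def by blast
      obtain x where "1 \<le> x" "x \<le> j" "j < c x" using exit_bot_ex[OF j1] by blast
      then show False using cl[of x] by auto
    qed
    have cer: "1 \<le> c e" "c e \<le> n + 1" using c_range[of e] eT step by auto
    then have cej: "Suc j < c e" using ceT False by auto
    have jr: "1 \<le> Suc j" "Suc j \<le> n + 1" using step by auto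
    have "c (Suc j) \<noteq> Suc j" using no_fix[OF jr] .
    moreover have "\<not> Suc j < c (Suc j)"
    proof
      assume "Suc j < c (Suc j)"
      then have "Suc j = e" using exit_bot_unique[of "Suc j" "Suc j" e] cej eT step by auto
      then show False using eT by simp
    qed
    moreover have "1 \<le> c (Suc j)" using c_range[OF jr] by simp
    ultimately have "c (Suc j) \<in> {1..j}" by auto
    then have "c (Suc j) = s" using arc_entry[OF A inj_c nin] by simp
    then have "arc c {1..Suc j} (Suc j) (Suc m)" unfolding ins
      by (rule arc_prepend[OF A _ nin])
    then show ?thesis by blast
  qed
qed

end


lemma dpath_sub: "is_dpath V E p \<Longrightarrow> set p \<subseteq> V"
  by (simp add: is_dpath_def)

lemma dpath_single: "v \<in> V \<Longrightarrow> is_dpath V E [v]"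
  by (simp add: is_dpath_def)

lemma GKS_bound:
  fixes g :: "'v \<Rightarrow> nat"
  assumes "finite V" "x \<in> {sum g (\<Union>p\<in>set ps. set p) | ps. length ps = t \<and> (\<forall>p\<in>set ps. is_dpath V E p)}"
  shows "x \<le> sum g V"
proof -
  obtain ps where x: "x = sum g (\<Union>p\<in>set ps. set p)" "\<forall>p\<in>set ps. is_dpath V E p" using assms(2) by auto
  have "(\<Union>p\<in>set ps. set p) \<subseteq> V" using x(2) dpath_sub by blast
  then show ?thesis using x(1) assms(1) by (simp add: sum_mono2)
qed

lemma GKS_fin:
  fixes g :: "'v \<Rightarrow> nat"
  assumes "finite V"
  shows "finite {sum g (\<Union>p\<in>set ps. set p) | ps. length ps = t \<and> (\<forall>p\<in>set ps. is_dpath V E p)}"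
proof (rule finite_subset[of _ "{..sum g V}"])
  show "{sum g (\<Union>p\<in>set ps. set p) | ps. length ps = t \<and> (\<forall>p\<in>set ps. is_dpath V E p)} \<subseteq> {..sum g V}"
    using GKS_bound[OF assms, of _ g t E] by blast
qed simp

lemma GKS_ne:
  fixes g :: "'v \<Rightarrow> nat"
  assumes "v \<in> V"
  shows "{sum g (\<Union>p\<in>set ps. set p) | ps. length ps = t \<and> (\<forall>p\<in>set ps. is_dpath V E p)} \<noteq> {}"
proof -
  have "length (replicate t [v]) = t \<and> (\<forall>p\<in>set (replicate t [v]). is_dpath V E p)"
    using dpath_single[OF assms] by simp
  then show ?thesis by blast
qed

lemma GKM_mono:
  fixes g :: "'v \<Rightarrow> nat"
  assumes "finite V" "v \<in> V"
  shows "GK_M V E g t \<le> GK_M V E g (Suc t)"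
  unfolding GK_M_def
proof (subst Max_le_iff[OF GKS_fin[OF assms(1)] GKS_ne[OF assms(2)]], intro ballI)
  fix x assume "x \<in> {sum g (\<Union>p\<in>set ps. set p) | ps. length ps = t \<and> (\<forall>p\<in>set ps. is_dpath V E p)}"
  then obtain ps where x: "x = sum g (\<Union>p\<in>set ps. set p)" "length ps = t" "\<forall>p\<in>set ps. is_dpath V E p"
    by auto
  define ps' where "ps' = [v] # ps"
  have p': "length ps' = Suc t" "\<forall>p\<in>set ps'. is_dpath V E p"
    using x dpath_single[OF assms(2)] unfolding ps'_def by auto
  have "(\<Union>p\<in>set ps'. set p) \<subseteq> V" using p'(2) dpath_sub by blast
  then have "x \<le> sum g (\<Union>p\<in>set ps'. set p)"
    unfolding x(1) ps'_def using assms(1) by (intro sum_mono2) (auto intro: finite_subset)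
  moreover have "sum g (\<Union>p\<in>set ps'. set p) \<in> {sum g (\<Union>p\<in>set ps. set p) | ps. length ps = Suc t \<and> (\<forall>p\<in>set ps. is_dpath V E p)}"
    using p' by blast
  ultimately show "x \<le> Max {sum g (\<Union>p\<in>set ps. set p) | ps. length ps = Suc t \<and> (\<forall>p\<in>set ps. is_dpath V E p)}"
    using Max_ge_iff[OF GKS_fin[OF assms(1)] GKS_ne[OF assms(2)]] by blast
qed

lemma GKM_0: "GK_M V E (g :: 'v \<Rightarrow> nat) 0 = 0"
proof -
  have "{sum g (\<Union>p\<in>set ps. set p) | ps. length ps = 0 \<and> (\<forall>p\<in>set ps. is_dpath V E p)} = {0}"
    by auto
  then show ?thesis by (simp add: GK_M_def)
qed

lemma GK_tele:
  fixes g :: "'v \<Rightarrow> nat"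
  assumes "finite V" "v \<in> V"
  shows "(\<Sum>e = 1..d. GK V E g e) = GK_M V E g d"
proof (induction d)
  case 0 then show ?case by (simp add: GKM_0)
next
  case (Suc d)
  have "(\<Sum>e = 1..Suc d. GK V E g e) = (\<Sum>e = 1..d. GK V E g e) + GK V E g (Suc d)"
    by simp
  also have "\<dots> = GK_M V E g d + (GK_M V E g (Suc d) - GK_M V E g d)"
    using Suc by (simp add: GK_def)
  also have "\<dots> = GK_M V E g (Suc d)" using GKM_mono[OF assms, of E g d] by simp
  finally show ?case .
qed



locale mainloc = cox n xs c for n xs c +
  fixes lam :: "nat list" and k :: nat and f :: "nat \<times> nat \<Rightarrow> nat"
  assumes part: "is_partition lam" and len: "lam1 lam + length lam = n + 1" and kr: "k \<in> {1..n}"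
begin

abbreviation "phi b \<equiv> (rowlab lam (fst b), collab lam (snd b))"
abbreviation "V \<equiv> ARk_verts n k"

lemma lam_ne: "lam \<noteq> []" using len n1 by (auto simp: lam1_def part_def)

lemma len1: "1 \<le> length lam" using lam_ne by (cases lam) auto

lemma lam1_pos: "1 \<le> lam1 lam" using part_pos[OF part _ len1] by (simp add: lam1_def)

lemma part1: "part lam 1 = lam1 lam" by (simp add: lam1_def)

lemma Fer_fin: "finite (Fer lam)"
  by (rule finite_subset[of _ "{1..length lam} \<times> {1..lam1 lam}"])
     (auto simp: Fer_def intro: order_trans[OF _ part_le_lam1[OF part]])

lemma sqk_Fer: "sqk lam k \<subseteq> Fer lam" by (auto simp: sqk_def)

lemma sqk_fin: "finite (sqk lam k)" using Fer_fin sqk_Fer finite_subset by blast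

lemma V_fin: "finite V"
  by (rule finite_subset[of _ "{1..n+1} \<times> {1..n+1}"]) (auto simp: ARk_verts_def ARverts_def)

lemma V_ne: "(k, k+1) \<in> V" using kr by (auto simp: ARk_verts_def ARverts_def)

lemma collab_le: "1 \<le> j \<Longrightarrow> collab lam j \<le> n + 1"
  using colLen_le[of lam j] len lam1_pos by (simp add: collab_def)

lemma inj_phi: "inj_on phi (Fer lam)"
proof (rule inj_onI)
  fix a b assume a: "a \<in> Fer lam" and b: "b \<in> Fer lam" and e: "phi a = phi b"
  obtain i j where ab: "a = (i, j)" by force
  obtain i' j' where bb: "b = (i', j')" by force
  note Fa = Fer_D[OF part a[unfolded ab]]
  note Fb = Fer_D[OF part b[unfolded bb]]
  have "i = i'"
  proof (rule ccontr)
    assume "i \<noteq> i'"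
    then have "i < i' \<or> i' < i" by auto
    then show False using rowlab_strict[OF part, of i i'] rowlab_strict[OF part, of i' i] Fa Fb e ab bb by auto
  qed
  moreover have "j = j'"
  proof (rule ccontr)
    assume "j \<noteq> j'"
    then have "j < j' \<or> j' < j" by auto
    then show False using collab_strict[of j j' lam] collab_strict[of j' j lam] Fa Fb e ab bb by auto
  qed
  ultimately show "a = b" using ab bb by simp
qed

lemma the_box:
  assumes "b \<in> Fer lam"
  shows "(THE b'. b' \<in> Fer lam \<and> rowlab lam (fst b') = rowlab lam (fst b) \<and> collab lam (snd b') = collab lam (snd b)) = b"
proof (rule the_equality)
  fix b' assume "b' \<in> Fer lam \<and> rowlab lam (fst b') = rowlab lam (fst b) \<and> collab lam (snd b') = collab lam (snd b)"
  then show "b' = b" using inj_phi assms unfolding inj_on_def by (metis prod.collapse)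
qed (use assms in simp)

lemma rep_phi:
  assumes "b \<in> Fer lam"
  shows "rep lam f (phi b) = f b"
proof -
  obtain i j where b: "b = (i, j)" by force
  note F = Fer_D[OF part assms[unfolded b]]
  have "rowlab lam i \<in> Lset lam" using F by (auto simp: Lset_def)
  moreover have "collab lam j \<in> Rset lam" using F by (auto simp: Rset_def)
  moreover have "rowlab lam i < collab lam j" using label_iff[OF part F(1,2,3,5)] F(4) by simp
  ultimately show ?thesis using the_box[OF assms] b by (simp add: rep_def)
qed

lemma phi_V:
  assumes "b \<in> sqk lam k"
  shows "phi b \<in> V"
proof -
  obtain i j where b: "b = (i, j)" by force
  have bF: "(i, j) \<in> Fer lam" using assms b sqk_Fer by auto
  note F = Fer_D[OF part bF]
  note S = sqk_imp[OF part assms[unfolded b]]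
  have "1 \<le> rowlab lam i" using F by (simp add: rowlab_def)
  moreover have "collab lam j \<le> n + 1" using collab_le F by simp
  ultimately show ?thesis using S b by (auto simp: ARk_verts_def ARverts_def)
qed

lemma rep_zero:
  assumes "v \<in> V" "v \<notin> phi ` sqk lam k"
  shows "rep lam f v = 0"
proof (rule ccontr)
  assume nz: "rep lam f v \<noteq> 0"
  obtain l r where v: "v = (l, r)" by force
  have c: "l \<in> Lset lam" "r \<in> Rset lam" "l < r" using nz v by (auto simp: rep_def split: if_splits)
  obtain i where i: "i \<in> {1..length lam}" "l = rowlab lam i" using c(1) by (auto simp: Lset_def)
  obtain j where j: "j \<in> {1..lam1 lam}" "r = collab lam j" using c(2) by (auto simp: Rset_def)
  have "j \<le> part lam i" using label_iff[OF part, of i j] i j c(3) by auto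
  then have ijF: "(i, j) \<in> Fer lam" using i j by (auto simp: Fer_def)
  have "l \<le> k" "k < r" using assms(1) v by (auto simp: ARk_verts_def)
  then have "(i, j) \<in> sqk lam k" using sqk_intro[OF part ijF] i j by simp
  then have "v \<in> phi ` sqk lam k" using v i j by force
  then show False using assms(2) by simp
qed

lemma UB:
  assumes "U \<subseteq> V"
  shows "sum (rep lam f) U \<le> sum f (sqk lam k)"
proof -
  have fU: "finite U" using assms V_fin finite_subset by blast
  have "sum (rep lam f) U = sum (rep lam f) (U \<inter> phi ` sqk lam k)"
  proof (rule sum.mono_neutral_right[OF fU])
    show "\<forall>x\<in>U - U \<inter> phi ` sqk lam k. rep lam f x = 0" using rep_zero assms by blast
  qed auto
  also have "\<dots> \<le> sum (rep lam f) (phi ` sqk lam k)"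
    using sqk_fin by (intro sum_mono2) auto
  also have "\<dots> = sum (rep lam f \<circ> phi) (sqk lam k)"
    using inj_phi sqk_Fer by (intro sum.reindex) (rule inj_on_subset)
  also have "\<dots> = sum f (sqk lam k)"
    using rep_phi sqk_Fer by (intro sum.cong) auto
  finally show ?thesis .
qed

end


context mainloc begin

lemma diag_fin: "finite (diag lam k)"
  using Fer_fin by (rule finite_subset[rotated]) (auto simp: diag_def)

lemma one_one_sqk: "(1, 1) \<in> sqk lam k"
proof -
  have F: "(1, 1) \<in> Fer lam" using part_pos[OF part _ len1] len1 by (simp add: Fer_def)
  have "rowlab lam 1 = 1" unfolding rowlab_def lam1_def by simp
  moreover have "length lam \<le> colLen lam 1"
    using colLen_ge[OF part _ order_refl] part_pos[OF part _ order_refl] len1 by simp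
  then have "n + 1 \<le> collab lam 1" using len by (simp add: collab_def)
  ultimately show ?thesis using sqk_intro[OF part F] kr by simp
qed

lemma diag_ne: "diag lam k \<noteq> {}"
  using one_one_sqk by (auto simp: sqk_def)

lemma delta_attained: "\<exists>i0 j0. (i0, j0) \<in> diag lam k \<and> min i0 j0 = delta lam k"
proof -
  have "delta lam k \<in> (\<lambda>(i, j). min i j) ` diag lam k"
    unfolding delta_def using diag_fin diag_ne by (intro Max_in) auto
  then show ?thesis by fastforce
qed

lemma delta_ge: "(i, j) \<in> diag lam k \<Longrightarrow> min i j \<le> delta lam k"
  unfolding delta_def using diag_fin by (intro Max_ge) force+

lemma diag_D: "(i, j) \<in> diag lam k \<Longrightarrow> (i, j) \<in> Fer lam \<and> lam1 lam + i = k + j"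
  by (simp add: diag_def)

lemma delta_pos: "1 \<le> delta lam k"
proof -
  obtain i0 j0 where d: "(i0, j0) \<in> diag lam k" "min i0 j0 = delta lam k" using delta_attained by blast
  then show ?thesis using Fer_D[OF part, of i0 j0] diag_D[OF d(1)] by auto
qed

lemma coord_prop:
  assumes "e \<in> {1..delta lam k}"
  shows "coord lam k e \<in> diag lam k \<and> min (fst (coord lam k e)) (snd (coord lam k e)) + e = delta lam k + 1"
proof -
  let ?P = "\<lambda>b. b \<in> diag lam k \<and> min (fst b) (snd b) + e = delta lam k + 1"
  obtain i0 j0 where d: "(i0, j0) \<in> diag lam k" "min i0 j0 = delta lam k" using delta_attained by blast
  note D0 = diag_D[OF d(1)]
  note F0 = Fer_D[OF part D0[THEN conjunct1]]
  define t where "t = e - 1"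
  have t: "t < delta lam k" "t \<le> i0 - 1" "t \<le> j0 - 1" using assms d(2) F0 unfolding t_def by auto
  have "part lam i0 \<le> part lam (i0 - t)" using part_mono[OF part, of "i0 - t" i0] F0 t by auto
  then have "(i0 - t, j0 - t) \<in> Fer lam" using F0 t by (auto simp: Fer_def)
  moreover have "lam1 lam + (i0 - t) = k + (j0 - t)" using D0 t by auto
  ultimately have "(i0 - t, j0 - t) \<in> diag lam k" by (simp add: diag_def)
  moreover have "min (i0 - t) (j0 - t) + e = delta lam k + 1" using d(2) t assms unfolding t_def by auto
  ultimately have ex: "?P (i0 - t, j0 - t)" by simp
  have un: "\<And>b b'. ?P b \<Longrightarrow> ?P b' \<Longrightarrow> b = b'"
  proof -
    fix b b' assume "?P b" "?P b'"
    then show "b = b'" using diag_D[of "fst b" "snd b"] diag_D[of "fst b'" "snd b'"]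
      by (cases b, cases b') auto
  qed
  have "?P (coord lam k e)" unfolding coord_def
    by (rule theI[of ?P, OF ex]) (erule un[OF _ ex])
  then show ?thesis .
qed

lemma RSK_coord:
  assumes "e \<in> {1..delta lam k}"
  shows "RSK lam c f (coord lam k e) = GK V (ARedge c) (rep lam f) e"
proof -
  obtain i j where b: "coord lam k e = (i, j)" by force
  have P: "(i, j) \<in> diag lam k" "min i j + e = delta lam k + 1" using coord_prop[OF assms] b by auto
  have "lam1 lam + i = k + j" using diag_D[OF P(1)] by simp
  then have "lam1 lam + i - j = k" by simp
  moreover have "lam1 lam + length lam - 1 = n" using len by simp
  moreover have "delta lam k + 1 - min i j = e" using P(2) by simp
  ultimately show ?thesis using b by (simp add: RSK_def Let_def)
qed

lemma row_path:
  assumes A: "arc c {k<..n+1} s m" and l: "1 \<le> l" "l \<le> k"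
  shows "is_dpath V (ARedge c) (map (\<lambda>i. (l, (c^^i) s)) [0..<m]) \<and>
         set (map (\<lambda>i. (l, (c^^i) s)) [0..<m]) = {l} \<times> {k<..n+1}"
proof -
  have m: "1 \<le> m" and inj: "inj_on (\<lambda>i. (c^^i) s) {..<m}" and S: "{k<..n+1} = (\<lambda>i. (c^^i) s) ` {..<m}"
    using A by (auto simp: arc_def)
  have st: "set (map (\<lambda>i. (l, (c^^i) s)) [0..<m]) = {l} \<times> {k<..n+1}"
    unfolding S by (auto simp: atLeast0LessThan)
  have "distinct (map (\<lambda>i. (l, (c^^i) s)) [0..<m])"
    using inj by (auto simp: distinct_map inj_on_def atLeast0LessThan)
  moreover have "set (map (\<lambda>i. (l, (c^^i) s)) [0..<m]) \<subseteq> V"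
    using st l by (auto simp: ARk_verts_def ARverts_def)
  moreover have "\<forall>i. i + 1 < length (map (\<lambda>i. (l, (c^^i) s)) [0..<m]) \<longrightarrow>
      ARedge c (map (\<lambda>i. (l, (c^^i) s)) [0..<m] ! i) (map (\<lambda>i. (l, (c^^i) s)) [0..<m] ! (i + 1))"
  proof (intro allI impI)
    fix i assume i: "i + 1 < length (map (\<lambda>i. (l, (c^^i) s)) [0..<m])"
    then have "(c^^(Suc i)) s \<in> {k<..n+1}" unfolding S by (intro image_eqI[where x="Suc i"]) auto
    then have "l < c ((c^^i) s)" using l by simp
    then show "ARedge c (map (\<lambda>i. (l, (c^^i) s)) [0..<m] ! i) (map (\<lambda>i. (l, (c^^i) s)) [0..<m] ! (i + 1))"
      using i by (simp add: ARedge_def)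
  qed
  moreover have "map (\<lambda>i. (l, (c^^i) s)) [0..<m] \<noteq> []" using m by simp
  ultimately show ?thesis using st by (simp add: is_dpath_def)
qed

lemma col_path:
  assumes A: "arc c {1..k} s m" and r: "k < r" "r \<le> n + 1"
  shows "is_dpath V (ARedge c) (map (\<lambda>i. ((c^^i) s, r)) [0..<m]) \<and>
         set (map (\<lambda>i. ((c^^i) s, r)) [0..<m]) = {1..k} \<times> {r}"
proof -
  have m: "1 \<le> m" and inj: "inj_on (\<lambda>i. (c^^i) s) {..<m}" and S: "{1..k} = (\<lambda>i. (c^^i) s) ` {..<m}"
    using A by (auto simp: arc_def)
  have st: "set (map (\<lambda>i. ((c^^i) s, r)) [0..<m]) = {1..k} \<times> {r}"
    unfolding S by (auto simp: atLeast0LessThan)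
  have "distinct (map (\<lambda>i. ((c^^i) s, r)) [0..<m])"
    using inj by (auto simp: distinct_map inj_on_def atLeast0LessThan)
  moreover have "set (map (\<lambda>i. ((c^^i) s, r)) [0..<m]) \<subseteq> V"
    using st r by (auto simp: ARk_verts_def ARverts_def)
  moreover have "\<forall>i. i + 1 < length (map (\<lambda>i. ((c^^i) s, r)) [0..<m]) \<longrightarrow>
      ARedge c (map (\<lambda>i. ((c^^i) s, r)) [0..<m] ! i) (map (\<lambda>i. ((c^^i) s, r)) [0..<m] ! (i + 1))"
  proof (intro allI impI)
    fix i assume i: "i + 1 < length (map (\<lambda>i. ((c^^i) s, r)) [0..<m])"
    then have "(c^^(Suc i)) s \<in> {1..k}" unfolding S by (intro image_eqI[where x="Suc i"]) auto
    then have "c ((c^^i) s) < r" using r by simp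
    then show "ARedge c (map (\<lambda>i. ((c^^i) s, r)) [0..<m] ! i) (map (\<lambda>i. ((c^^i) s, r)) [0..<m] ! (i + 1))"
      using i by (simp add: ARedge_def)
  qed
  moreover have "map (\<lambda>i. ((c^^i) s, r)) [0..<m] \<noteq> []" using m by simp
  ultimately show ?thesis using st by (simp add: is_dpath_def)
qed

end


context mainloc begin

lemma sum_phi: "sum (rep lam f) (phi ` sqk lam k) = sum f (sqk lam k)"
proof -
  have "sum (rep lam f) (phi ` sqk lam k) = sum (rep lam f \<circ> phi) (sqk lam k)"
    using inj_phi sqk_Fer by (intro sum.reindex) (rule inj_on_subset)
  also have "\<dots> = sum f (sqk lam k)"
    using rep_phi sqk_Fer by (intro sum.cong) auto
  finally show ?thesis .
qed

lemma sqk_below: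
  assumes "(i, j) \<in> sqk lam k"
  obtains i' j' where "(i', j') \<in> diag lam k" "i \<le> i'" "j \<le> j'"
  using assms unfolding sqk_def by auto

lemma LB:
  "\<exists>ps. length ps = delta lam k \<and> (\<forall>p\<in>set ps. is_dpath V (ARedge c) p) \<and>
        phi ` sqk lam k \<subseteq> (\<Union>p\<in>set ps. set p)"
proof -
  obtain i0 j0 where d: "(i0, j0) \<in> diag lam k" "min i0 j0 = delta lam k" using delta_attained by blast
  note D0 = diag_D[OF d(1)]
  note F0 = Fer_D[OF part D0[THEN conjunct1]]
  have k1: "1 \<le> k" "k \<le> n" using kr by auto
  show ?thesis
  proof (cases "i0 \<le> j0")
    case True
    then have dl: "delta lam k = i0" using d by simp
    have rows: "\<And>i j. (i, j) \<in> sqk lam k \<Longrightarrow> i \<le> i0"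
    proof -
      fix i j assume "(i, j) \<in> sqk lam k"
      then obtain i' j' where b: "(i', j') \<in> diag lam k" "i \<le> i'" "j \<le> j'" by (rule sqk_below)
      have "i' \<le> i0"
      proof (rule ccontr)
        assume "\<not> i' \<le> i0"
        moreover have "lam1 lam + i' = k + j'" using diag_D[OF b(1)] by simp
        ultimately have "min i0 j0 < min i' j'" using D0 True by auto
        then show False using delta_ge[OF b(1)] d(2) by (auto simp: min_def split: if_splits)
      qed
      then show "i \<le> i0" using b by simp
    qed
    have rl: "\<And>i. i \<in> {1..delta lam k} \<Longrightarrow> 1 \<le> rowlab lam i \<and> rowlab lam i \<le> k"
    proof -
      fix i assume i: "i \<in> {1..delta lam k}"
      have "(i, 1) \<in> Fer lam" using i dl F0 part_pos[OF part, of i] by (auto simp: Fer_def)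
      moreover have "(i, 1) \<in> sqk lam k" using calculation d(1) i dl F0 unfolding sqk_def by force
      ultimately show "1 \<le> rowlab lam i \<and> rowlab lam i \<le> k"
        using sqk_imp[OF part] i by (auto simp: rowlab_def)
    qed
    obtain s m where A: "arc c {k<..n+1} s m" using top_arc[OF k1] by blast
    define ps where "ps = map (\<lambda>i. map (\<lambda>t. (rowlab lam i, (c^^t) s)) [0..<m]) [1..<delta lam k + 1]"
    have "length ps = delta lam k" unfolding ps_def by simp
    moreover have "\<forall>p\<in>set ps. is_dpath V (ARedge c) p"
      unfolding ps_def using row_path[OF A] rl by auto
    moreover have "phi ` sqk lam k \<subseteq> (\<Union>p\<in>set ps. set p)"
    proof
      fix v assume "v \<in> phi ` sqk lam k"
      then obtain i j where ij: "(i, j) \<in> sqk lam k" "v = (rowlab lam i, collab lam j)" by force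
      have ijF: "(i, j) \<in> Fer lam" using ij sqk_Fer by auto
      have iin: "i \<in> {1..delta lam k}" using rows[OF ij(1)] dl Fer_D[OF part ijF] by auto
      have "collab lam j \<in> {k<..n+1}" using sqk_imp[OF part ij(1)] collab_le Fer_D[OF part ijF] by auto
      then have "v \<in> set (map (\<lambda>t. (rowlab lam i, (c^^t) s)) [0..<m])"
        using row_path[OF A] rl[OF iin] ij(2) by auto
      moreover have "map (\<lambda>t. (rowlab lam i, (c^^t) s)) [0..<m] \<in> set ps"
        unfolding ps_def set_map using iin by (intro image_eqI[where x=i]) auto
      ultimately show "v \<in> (\<Union>p\<in>set ps. set p)" by blast
    qed
    ultimately show ?thesis by blast
  next
    case False
    then have dl: "delta lam k = j0" using d by simp
    have cols: "\<And>i j. (i, j) \<in> sqk lam k \<Longrightarrow> j \<le> j0"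
    proof -
      fix i j assume "(i, j) \<in> sqk lam k"
      then obtain i' j' where b: "(i', j') \<in> diag lam k" "i \<le> i'" "j \<le> j'" by (rule sqk_below)
      have "j' \<le> j0"
      proof (rule ccontr)
        assume "\<not> j' \<le> j0"
        moreover have "lam1 lam + i' = k + j'" using diag_D[OF b(1)] by simp
        ultimately have "min i0 j0 < min i' j'" using D0 False by auto
        then show False using delta_ge[OF b(1)] d(2) by (auto simp: min_def split: if_splits)
      qed
      then show "j \<le> j0" using b by simp
    qed
    have cl: "\<And>j. j \<in> {1..delta lam k} \<Longrightarrow> k < collab lam j \<and> collab lam j \<le> n + 1"
    proof -
      fix j assume j: "j \<in> {1..delta lam k}"
      have "part lam i0 \<le> part lam 1" using part_mono[OF part, of 1 i0] F0 by simp
      then have "(1, j) \<in> Fer lam" using j dl F0 len1 by (auto simp: Fer_def)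
      moreover have "(1, j) \<in> sqk lam k" using calculation d(1) j dl F0 unfolding sqk_def by force
      ultimately show "k < collab lam j \<and> collab lam j \<le> n + 1"
        using sqk_imp[OF part] collab_le j by auto
    qed
    obtain s m where A: "arc c {1..k} s m" using bot_arc[OF k1] by blast
    define ps where "ps = map (\<lambda>j. map (\<lambda>t. ((c^^t) s, collab lam j)) [0..<m]) [1..<delta lam k + 1]"
    have "length ps = delta lam k" unfolding ps_def by simp
    moreover have "\<forall>p\<in>set ps. is_dpath V (ARedge c) p"
      unfolding ps_def using col_path[OF A] cl by auto
    moreover have "phi ` sqk lam k \<subseteq> (\<Union>p\<in>set ps. set p)"
    proof
      fix v assume "v \<in> phi ` sqk lam k"
      then obtain i j where ij: "(i, j) \<in> sqk lam k" "v = (rowlab lam i, collab lam j)" by force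
      have ijF: "(i, j) \<in> Fer lam" using ij sqk_Fer by auto
      have jin: "j \<in> {1..delta lam k}" using cols[OF ij(1)] dl Fer_D[OF part ijF] by auto
      have "rowlab lam i \<in> {1..k}" using sqk_imp[OF part ij(1)] Fer_D[OF part ijF] by (auto simp: rowlab_def)
      then have "v \<in> set (map (\<lambda>t. ((c^^t) s, collab lam j)) [0..<m])"
        using col_path[OF A] cl[OF jin] ij(2) by auto
      moreover have "map (\<lambda>t. ((c^^t) s, collab lam j)) [0..<m] \<in> set ps"
        unfolding ps_def set_map using jin by (intro image_eqI[where x=j]) auto
      ultimately show "v \<in> (\<Union>p\<in>set ps. set p)" by blast
    qed
    ultimately show ?thesis by blast
  qed
qed

lemma GKM_val: "GK_M V (ARedge c) (rep lam f) (delta lam k) = sum f (sqk lam k)"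
proof -
  let ?S = "{sum (rep lam f) (\<Union>p\<in>set ps. set p) | ps. length ps = delta lam k \<and> (\<forall>p\<in>set ps. is_dpath V (ARedge c) p)}"
  have fin: "finite ?S" by (rule GKS_fin[OF V_fin])
  have ne: "?S \<noteq> {}" by (rule GKS_ne[OF V_ne])
  have "Max ?S \<le> sum f (sqk lam k)"
  proof (subst Max_le_iff[OF fin ne], intro ballI)
    fix x assume "x \<in> ?S"
    then obtain ps where x: "x = sum (rep lam f) (\<Union>p\<in>set ps. set p)" "\<forall>p\<in>set ps. is_dpath V (ARedge c) p"
      by auto
    have "(\<Union>p\<in>set ps. set p) \<subseteq> V" using x(2) dpath_sub by blast
    then show "x \<le> sum f (sqk lam k)" unfolding x(1) by (rule UB)
  qed
  moreover have "sum f (sqk lam k) \<le> Max ?S"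
  proof -
    obtain ps where ps: "length ps = delta lam k" "\<forall>p\<in>set ps. is_dpath V (ARedge c) p"
      "phi ` sqk lam k \<subseteq> (\<Union>p\<in>set ps. set p)" using LB by blast
    have sub: "(\<Union>p\<in>set ps. set p) \<subseteq> V" using ps(2) dpath_sub by blast
    then have "finite (\<Union>p\<in>set ps. set p)" using V_fin finite_subset by blast
    then have "sum (rep lam f) (phi ` sqk lam k) \<le> sum (rep lam f) (\<Union>p\<in>set ps. set p)"
      using ps(3) by (rule sum_mono2) simp
    then have "sum f (sqk lam k) \<le> sum (rep lam f) (\<Union>p\<in>set ps. set p)" using sum_phi by simp
    also have "\<dots> \<le> Max ?S"
    proof (rule Max_ge[OF fin])
      show "sum (rep lam f) (\<Union>p\<in>set ps. set p) \<in> ?S" using ps(1,2) by blast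
    qed
    finally show ?thesis .
  qed
  ultimately show ?thesis unfolding GK_M_def by simp
qed

theorem main_loc: "(\<Sum>e = 1..delta lam k. RSK lam c f (coord lam k e)) = (\<Sum>b\<in>sqk lam k. f b)"
proof -
  have "(\<Sum>e = 1..delta lam k. RSK lam c f (coord lam k e)) = (\<Sum>e = 1..delta lam k. GK V (ARedge c) (rep lam f) e)"
    using RSK_coord by (intro sum.cong) auto
  also have "\<dots> = GK_M V (ARedge c) (rep lam f) (delta lam k)" by (rule GK_tele[OF V_fin V_ne])
  also have "\<dots> = sum f (sqk lam k)" by (rule GKM_val)
  finally show ?thesis .
qed

end

theorem lemma6p8:
  fixes n k :: nat and lam :: "nat list" and c :: "nat \<Rightarrow> nat" and f :: "nat \<times> nat \<Rightarrow> nat"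
  assumes "1 \<le> n"
    and "is_partition lam"
    and "lam1 lam + length lam = n + 1"
    and "coxeter n c"
    and "k \<in> {1..n}"
  shows "(\<Sum>e = 1..delta lam k. RSK lam c f (coord lam k e)) = (\<Sum>b\<in>sqk lam k. f b)"
proof -
  obtain xs where xs: "distinct xs" "set xs = {1..n}" "c = foldr (\<lambda>i acc. sgen i \<circ> acc) xs id"
    using assms(4) unfolding coxeter_def by blast
  interpret mainloc n xs c lam k f
    using assms xs by unfold_locales (auto simp: FF_def)
  show ?thesis by (rule main_loc)
qed


end
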